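(* Let $0\le a<b<1$ and let $\varrho\ge0$ be a bounded function on $[a,b]$ such that $\varrho/\zeta$ is non-decreasing on $[a,b]$. Then (i) $m(\varrho/\zeta,a,b)\le(\varrho/\zeta)(b-)+m(a,b)$, where $(\varrho/\zeta)(b-)=\lim_{t\uparrow b}\varrho(t)/\zeta(t)$; (ii) equality holds in (i) if and only if $\varrho\equiv0$ on $[a,b)$.
   Context: $\zeta(t)=\frac{2}{1-t^2}$ on $[0,1)$. With $h$ a primitive of $\varrho$ on $[a,b]$, $\psi=e^h$, $\mathtt f(x)=x\zeta(x)^2\psi(x)$, $\mathtt g(x)=x\zeta(x)\psi(x)$, define $m(\varrho/\zeta,a,b):=\frac{\mathtt g(b)-\mathtt g(a)}{\int_a^b\mathtt f\,dt}$, and $m(a,b):=m(0,a,b)=\frac{b\zeta(b)-a\zeta(a)}{\zeta(b)-\zeta(a)}=\frac{1+ab}{a+b}$ (the value for $\varrho\equiv0$). *)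

theory Defs
  imports "HOL-Analysis.Analysis"
begin

definition zeta :: "real \<Rightarrow> real" where
  "zeta t = 2 / (1 - t\<^sup>2)"

definition m0 :: "real \<Rightarrow> real \<Rightarrow> real" where
  "m0 a b = (b * zeta b - a * zeta a) / (zeta b - zeta a)"

text \<open>m(rho/zeta,a,b), with the primitive h x = integral of rho over [a,x]
  (the choice of primitive does not affect the quotient).\<close>
definition m_rho :: "(real \<Rightarrow> real) \<Rightarrow> real \<Rightarrow> real \<Rightarrow> real" where
  "m_rho rho a b =
    (let h = (\<lambda>x. integral {a..x} rho);
         psi = (\<lambda>x. exp (h x));
         f = (\<lambda>x. x * (zeta x)\<^sup>2 * psi x);
         g = (\<lambda>x. x * zeta x * psi x)
     in (g b - g a) / integral {a..b} f)"

end

theory Submission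
  imports Defs "HOL-Analysis.Analysis"
begin

lemma zeta_pos: "\<bar>t\<bar> < 1 \<Longrightarrow> zeta t > 0"
proof -
  assume "\<bar>t\<bar> < 1"
  hence "t^2 < 1" by (simp add: abs_square_less_1)
  thus ?thesis by (simp add: zeta_def)
qed

lemma zeta_ge2: "\<bar>t\<bar> < 1 \<Longrightarrow> zeta t \<ge> 2"
proof -
  assume "\<bar>t\<bar> < 1"
  hence "t^2 < 1" by (simp add: abs_square_less_1)
  moreover have "0 \<le> t^2" by simp
  ultimately show ?thesis by (simp add: zeta_def field_simps)
qed

lemma zeta_deriv: "\<bar>t\<bar> < 1 \<Longrightarrow> (zeta has_real_derivative t * (zeta t)^2) (at t)"
proof -
  assume "\<bar>t\<bar> < 1"
  hence "t^2 < 1" by (simp add: abs_square_less_1)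
  hence ne: "1 - t^2 \<noteq> 0" by simp
  have ne2: "1 - t*t \<noteq> 0" using ne by (simp add: power2_eq_square)
  show ?thesis unfolding zeta_def
    using ne2 by (auto intro!: derivative_eq_intros simp: field_simps power2_eq_square)
qed

lemma ctbl_deriv_le:
  fixes \<Phi> :: "real \<Rightarrow> real"
  assumes ab: "a < b" and cont: "continuous_on {a..b} \<Phi>" and D: "countable D"
    and der: "\<And>x. x \<in> {a<..<b} - D \<Longrightarrow> (\<Phi> has_real_derivative 0) (at x)"
  shows "\<Phi> b \<le> \<Phi> a"
proof (rule ccontr)
  assume "\<not> \<Phi> b \<le> \<Phi> a"
  hence lt: "\<Phi> a < \<Phi> b" by simp
  define e where "e = (\<Phi> b - \<Phi> a) / (2*(b-a))"
  have e: "e > 0" using lt ab by (simp add: e_def)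
  define \<Psi> where "\<Psi> x = \<Phi> x - e*(x-a)" for x
  have Pa: "\<Psi> a = \<Phi> a" by (simp add: \<Psi>_def)
  have Pb: "\<Psi> b = (\<Phi> a + \<Phi> b)/2" using ab by (simp add: \<Psi>_def e_def field_simps)
  have contP: "continuous_on {a..b} \<Psi>" unfolding \<Psi>_def by (intro continuous_intros cont)
  have unc: "uncountable {\<Psi> a<..<\<Psi> b}" using lt Pa Pb by (subst uncountable_open_interval) simp
  have "countable (\<Psi> ` D)" using D by simp
  then obtain y where y: "y \<in> {\<Psi> a<..<\<Psi> b}" "y \<notin> \<Psi> ` D"
    using unc by (meson countable_subset subsetI)
  define T where "T = {x\<in>{a..b}. \<Psi> x \<le> y}"
  have Tne: "a \<in> T" using y ab by (simp add: T_def)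
  have "closed ({a..b} \<inter> \<Psi> -` {..y})"
    by (rule continuous_closed_preimage[OF contP]) auto
  moreover have "{a..b} \<inter> \<Psi> -` {..y} = T" by (auto simp: T_def)
  ultimately have Tcl: "closed T" by simp
  have Tbdd: "bdd_above T" unfolding T_def by (rule bdd_aboveI[of _ b]) auto
  define s where "s = Sup T"
  have sT: "s \<in> T" unfolding s_def using closed_contains_Sup[OF _ Tbdd Tcl] Tne by blast
  have ups: "\<And>x. x \<in> T \<Longrightarrow> x \<le> s" using cSup_upper Tbdd s_def by blast
  have sab: "a \<le> s" "s \<le> b" using sT by (auto simp: T_def)
  have Ps: "\<Psi> s = y"
  proof -
    have "\<Psi> s \<le> y" using sT T_def by auto
    moreover have "y \<le> \<Psi> b" using y by auto
    moreover have "continuous_on {s..b} \<Psi>" by (rule continuous_on_subset[OF contP]) (use sab in auto)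
    ultimately obtain x where x: "s \<le> x" "x \<le> b" "\<Psi> x = y" using IVT'[of \<Psi> s y b] sab by auto
    then have "x \<in> T" using sab by (auto simp: T_def)
    then have "x = s" using ups x by force
    then show ?thesis using x by simp
  qed
  have "s \<noteq> a" using Ps Pa y by auto
  moreover have "s \<noteq> b" using Ps y(1) by auto
  ultimately have sin: "s \<in> {a<..<b}" using sab by auto
  have "s \<notin> D" using Ps y(2) by auto
  hence ds: "(\<Phi> has_real_derivative 0) (at s)" using der sin by auto
  have "(\<Psi> has_real_derivative 0 - e * 1) (at s)" unfolding \<Psi>_def
    by (auto intro!: derivative_eq_intros ds)
  then obtain d where d: "d > 0" "\<And>h. h > 0 \<Longrightarrow> h < d \<Longrightarrow> \<Psi> s > \<Psi> (s + h)"
    using DERIV_neg_dec_right e by force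
  define h where "h = min d (b - s) / 2"
  have h: "h > 0" "h < d" "s + h \<le> b" using d(1) sin unfolding h_def by (auto simp: min_def field_simps)
  have "\<Psi> (s+h) < y" using d(2)[OF h(1,2)] Ps by simp
  hence "s + h \<in> T" using h sab by (auto simp: T_def)
  hence "s + h \<le> s" by (rule ups)
  thus False using h by simp
qed

lemma ctbl_deriv_eq:
  fixes \<Phi> :: "real \<Rightarrow> real"
  assumes ab: "a < b" and cont: "continuous_on {a..b} \<Phi>" and D: "countable D"
    and der: "\<And>x. x \<in> {a<..<b} - D \<Longrightarrow> (\<Phi> has_real_derivative 0) (at x)"
  shows "\<Phi> b = \<Phi> a"
proof -
  have "\<Phi> b \<le> \<Phi> a" by (rule ctbl_deriv_le[OF ab cont D der])
  moreover have "(\<lambda>x. - \<Phi> x) b \<le> (\<lambda>x. - \<Phi> x) a"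
    apply (rule ctbl_deriv_le[OF ab _ D])
     apply (intro continuous_intros cont)
    using der DERIV_minus by fastforce
  ultimately show ?thesis by simp
qed


lemma ftc_ctbl:
  fixes F \<phi> :: "real \<Rightarrow> real"
  assumes ab: "a < b" and contF: "continuous_on {a..b} F" and D: "countable D"
    and int: "\<phi> integrable_on {a..b}"
    and der: "\<And>x. x \<in> {a<..<b} - D \<Longrightarrow> (F has_real_derivative \<phi> x) (at x)"
    and cphi: "\<And>x. x \<in> {a<..<b} - D \<Longrightarrow> isCont \<phi> x"
  shows "integral {a..b} \<phi> = F b - F a"
proof -
  define \<Phi> where "\<Phi> x = F x - integral {a..x} \<phi>" for x
  have "\<Phi> b = \<Phi> a"
  proof (rule ctbl_deriv_eq[OF ab _ D])
    show "continuous_on {a..b} \<Phi>" unfolding \<Phi>_def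
      by (intro continuous_intros contF indefinite_integral_continuous_1 int)
    fix x assume x: "x \<in> {a<..<b} - D"
    have "((\<lambda>u. integral {a..u} \<phi>) has_vector_derivative \<phi> x) (at x within ({a..b} - {}))"
      by (rule integral_has_vector_derivative_continuous_at[OF int])
         (use x cphi in \<open>auto intro: continuous_at_imp_continuous_within\<close>)
    moreover have "at x within {a..b} = at x" using x by (intro at_within_interior) auto
    ultimately have "((\<lambda>u. integral {a..u} \<phi>) has_real_derivative \<phi> x) (at x)"
      by (simp add: has_real_derivative_iff_has_vector_derivative)
    then show "(\<Phi> has_real_derivative 0) (at x)" unfolding \<Phi>_def
      using der[OF x] DERIV_diff by fastforce
  qed
  thus ?thesis by (simp add: \<Phi>_def)
qed

lemma integrable_cont_times:
  fixes c \<rho> :: "real \<Rightarrow> real"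
  assumes c: "continuous_on {a..b} c" and \<rho>: "\<rho> integrable_on {a..b}"
    and nn: "\<And>x. x\<in>{a..b} \<Longrightarrow> 0 \<le> \<rho> x"
  shows "(\<lambda>x. c x * \<rho> x) integrable_on {a..b}"
proof -
  have "\<rho> absolutely_integrable_on {a..b}" using nn \<rho> absolutely_integrable_on_iff_nonneg by blast
  moreover have "c \<in> borel_measurable (lebesgue_on {a..b})"
    by (rule continuous_imp_measurable_on_sets_lebesgue[OF c]) auto
  moreover have "bounded (c ` {a..b})"
    using compact_continuous_image[OF c] compact_imp_bounded by auto
  ultimately have "(\<lambda>x. c x * \<rho> x) absolutely_integrable_on {a..b}"
    by (intro absolutely_integrable_bounded_measurable_product_real) auto
  thus ?thesis using absolutely_integrable_on_def by blast
qed

lemma m0_eq: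
  assumes "0 \<le> a" "a < b" "b < 1"
  shows "m0 a b = (1 + a*b) / (a+b)"
proof -
  have "a*a < 1" "b*b < 1" using assms mult_strict_mono'[of a 1 a 1] mult_strict_mono'[of b 1 b 1] by auto
  hence a1: "1 - a^2 > 0" "1 - b^2 > 0" by (auto simp: power2_eq_square)
  have "a*a < b*b" using assms by (intro mult_strict_mono') auto
  hence ne: "b^2 - a^2 \<noteq> 0" by (simp add: power2_eq_square)
  have ab: "a + b > 0" using assms by simp
  define P where "P = (1-a^2)*(1-b^2)"
  have P: "P \<noteq> 0" using a1 by (simp add: P_def)
  have num: "b*zeta b - a*zeta a = (2*b*(1-a^2) - 2*a*(1-b^2)) / P"
    using a1 unfolding P_def zeta_def by (simp add: field_simps)
  have den: "zeta b - zeta a = (2*(1-a^2) - 2*(1-b^2)) / P"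
    using a1 unfolding P_def zeta_def by (simp add: field_simps)
  have "m0 a b = (2*b*(1-a^2) - 2*a*(1-b^2)) / (2*(1-a^2) - 2*(1-b^2))"
    unfolding m0_def num den using P by simp
  also have "\<dots> = (2*(b-a)*(1+a*b)) / (2*(b-a)*(a+b))"
    by (simp add: algebra_simps power2_eq_square)
  also have "\<dots> = (1 + a*b) / (a+b)" using assms by simp
  finally show ?thesis .
qed


theorem mainTheorem9:
  fixes rho :: "real \<Rightarrow> real" and a b :: real
  assumes "0 \<le> a" and "a < b" and "b < 1"
    and "\<forall>t\<in>{a..b}. 0 \<le> rho t"
    and "bounded (rho ` {a..b})"
    and "mono_on {a..b} (\<lambda>t. rho t / zeta t)"
  shows "m_rho rho a b \<le> Lim (at_left b) (\<lambda>t. rho t / zeta t) + m0 a b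
     \<and> (m_rho rho a b = Lim (at_left b) (\<lambda>t. rho t / zeta t) + m0 a b
          \<longleftrightarrow> (\<forall>t\<in>{a..<b}. rho t = 0))"
proof -
  note a0 = assms(1) and ab = assms(2) and b1 = assms(3)
  have abs1: "\<bar>t\<bar> < 1" if "t \<in> {a..b}" for t using that a0 b1 by auto
  have zpos: "zeta t > 0" if "t \<in> {a..b}" for t using zeta_pos abs1 that by blast
  have z2: "zeta t \<ge> 2" if "t \<in> {a..b}" for t using zeta_ge2 abs1 that by blast
  have zder: "(zeta has_real_derivative t * (zeta t)^2) (at t)" if "t \<in> {a..b}" for t
    using zeta_deriv abs1 that by blast
  have zcont: "continuous_on {a..b} zeta"
    by (intro continuous_at_imp_continuous_on ballI) (use zder DERIV_isCont in blast)
  define r where "r = (\<lambda>t. rho t / zeta t)"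
  have rmono: "mono_on {a..b} r" using assms(6) by (simp add: r_def)
  have rle: "r x \<le> r y" if "x \<in> {a..b}" "y \<in> {a..b}" "x \<le> y" for x y
    using rmono that by (simp add: mono_on_def)
  have rho_eq: "rho t = zeta t * r t" if "t \<in> {a..b}" for t
    using zpos[OF that] by (simp add: r_def)
  have rnn: "0 \<le> r t" if "t \<in> {a..b}" for t
    using zpos[OF that] assms(4) that by (simp add: r_def)
  have rint: "r integrable_on {a..b}" using integrable_on_mono_on[OF rmono] .
  have rhoint: "rho integrable_on {a..b}"
  proof -
    have "(\<lambda>x. zeta x * r x) integrable_on {a..b}"
      by (rule integrable_cont_times[OF zcont rint rnn])
    thus ?thesis using integrable_cong[of "{a..b}" rho "\<lambda>x. zeta x * r x"] rho_eq by blast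
  qed
  have rhonn: "\<And>x. x \<in> {a..b} \<Longrightarrow> 0 \<le> rho x" using assms(4) by blast
  have rhoint_sub: "rho integrable_on {x..y}" if "a \<le> x" "y \<le> b" for x y
    by (rule integrable_on_subinterval[OF rhoint]) (use that in auto)
  define h where "h = (\<lambda>x. integral {a..x} rho)"
  define psi where "psi = (\<lambda>x. exp (h x))"
  define F where "F = (\<lambda>x. x * zeta x * psi x)"
  define f where "f = (\<lambda>x. x * (zeta x)\<^sup>2 * psi x)"
  have mrho: "m_rho rho a b = (F b - F a) / integral {a..b} f"
    by (simp add: m_rho_def Let_def F_def f_def psi_def h_def)
  have hcont: "continuous_on {a..b} h" unfolding h_def
    by (rule indefinite_integral_continuous_1[OF rhoint])
  have psicont: "continuous_on {a..b} psi" unfolding psi_def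
    by (intro continuous_intros hcont)
  have Fcont: "continuous_on {a..b} F" unfolding F_def
    by (intro continuous_intros psicont zcont)
  have fcont: "continuous_on {a..b} f" unfolding f_def
    by (intro continuous_intros psicont zcont)
  have hsplit: "h y = h x + integral {x..y} rho" if "a \<le> x" "x \<le> y" "y \<le> b" for x y
    unfolding h_def using Henstock_Kurzweil_Integration.integral_combine[OF that(1,2) rhoint_sub[of a y]] that by auto
  have hmono: "h x \<le> h y" if "a \<le> x" "x \<le> y" "y \<le> b" for x y
  proof -
    have "0 \<le> integral {x..y} rho"
      by (rule integral_nonneg[OF rhoint_sub]) (use that rhonn in auto)
    thus ?thesis using hsplit[OF that] by simp
  qed
  have psimono: "psi x \<le> psi y" if "a \<le> x" "x \<le> y" "y \<le> b" for x y
    using hmono[OF that] by (simp add: psi_def)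
  define D where "D = {x\<in>{a..b}. \<not> continuous (at x within {a..b}) r}"
  have Dc: "countable D" unfolding D_def by (rule mono_on_ctble_discont[OF rmono])
  have rhocont: "isCont rho x" if x: "x \<in> {a<..<b} - D" for x
  proof -
    have "at x within {a..b} = at x" using x by (intro at_within_interior) auto
    hence rc: "isCont r x" using x by (auto simp: D_def)
    have zc: "isCont zeta x" using zder[of x] x DERIV_isCont by auto
    have ev: "eventually (\<lambda>y. y \<in> {a<..<b}) (nhds x)" using x
      by (intro eventually_nhds_in_open) auto
    have "eventually (\<lambda>y. rho y = zeta y * r y) (nhds x)"
      by (rule eventually_mono[OF ev]) (auto intro: rho_eq)
    moreover have "isCont (\<lambda>y. zeta y * r y) x" by (intro continuous_intros rc zc)
    ultimately show ?thesis using isCont_cong[of rho "\<lambda>y. zeta y * r y" x] by simp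
  qed
  have hder: "(h has_real_derivative rho x) (at x)" if x: "x \<in> {a<..<b} - D" for x
  proof -
    have "((\<lambda>u. integral {a..u} rho) has_vector_derivative rho x) (at x within ({a..b} - {}))"
      by (rule integral_has_vector_derivative_continuous_at[OF rhoint])
         (use x rhocont in \<open>auto intro: continuous_at_imp_continuous_within\<close>)
    moreover have "at x within {a..b} = at x" using x by (intro at_within_interior) auto
    ultimately show ?thesis
      by (simp add: has_real_derivative_iff_has_vector_derivative h_def)
  qed
  define phi1 where "phi1 = (\<lambda>x. (zeta x + x * (x * (zeta x)^2)) * psi x)"
  define c2 where "c2 = (\<lambda>x. x * zeta x * psi x)"
  have phi1cont: "continuous_on {a..b} phi1" unfolding phi1_def
    by (intro continuous_intros psicont zcont)
  have c2cont: "continuous_on {a..b} c2" unfolding c2_def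
    by (intro continuous_intros psicont zcont)
  have phi1int: "phi1 integrable_on {a..b}" by (rule integrable_continuous_interval[OF phi1cont])
  have phi2int: "(\<lambda>x. c2 x * rho x) integrable_on {a..b}"
    by (rule integrable_cont_times[OF c2cont rhoint rhonn])
  have Fder: "(F has_real_derivative phi1 x + c2 x * rho x) (at x)" if x: "x \<in> {a<..<b} - D" for x
  proof -
    have zd: "(zeta has_real_derivative x * (zeta x)^2) (at x)" using zder x by auto
    have hd: "(h has_real_derivative rho x) (at x)" using hder x by auto
    show ?thesis unfolding F_def psi_def phi1_def c2_def
      by (auto intro!: derivative_eq_intros zd hd simp: algebra_simps)
  qed
  have phicont: "isCont (\<lambda>x. phi1 x + c2 x * rho x) x" if x: "x \<in> {a<..<b} - D" for x
  proof -
    have zc: "isCont zeta x" using zder[of x] x DERIV_isCont by auto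
    have hc: "isCont h x" using hder[OF x] DERIV_isCont by auto
    show ?thesis unfolding phi1_def c2_def psi_def
      by (intro continuous_intros zc hc rhocont x)
  qed
  have FTC: "integral {a..b} (\<lambda>x. phi1 x + c2 x * rho x) = F b - F a"
    by (rule ftc_ctbl[OF ab Fcont Dc integrable_add[OF phi1int phi2int] Fder phicont])
  hence FTC': "F b - F a = integral {a..b} phi1 + integral {a..b} (\<lambda>x. c2 x * rho x)"
    using integral_add[OF phi1int phi2int] by simp
  define S where "S = Sup (r ` {a..<b})"
  have bddr: "bdd_above (r ` {a..<b})"
    by (rule bdd_aboveI[of _ "r b"]) (use ab in \<open>auto intro!: rle\<close>)
  have rS: "r x \<le> S" if "x \<in> {a..<b}" for x
    unfolding S_def by (rule cSup_upper) (use that bddr in auto)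
  have neab: "r ` {a..<b} \<noteq> {}" using ab by auto
  have lim: "(r \<longlongrightarrow> S) (at_left b)"
  proof (rule order_tendstoI)
    fix y assume "y < S"
    then obtain t where t: "t \<in> {a..<b}" "y < r t"
      unfolding S_def using less_cSup_iff[OF neab bddr] by auto
    have "eventually (\<lambda>x. x \<in> {t<..<b}) (at_left b)" using t by (intro eventually_at_left_real) auto
    thus "eventually (\<lambda>x. y < r x) (at_left b)"
    proof (rule eventually_mono)
      fix x assume "x \<in> {t<..<b}"
      hence "r t \<le> r x" using t by (intro rle) auto
      thus "y < r x" using t by simp
    qed
  next
    fix y assume "S < y"
    have "eventually (\<lambda>x. x \<in> {a<..<b}) (at_left b)" using ab by (intro eventually_at_left_real)
    thus "eventually (\<lambda>x. r x < y) (at_left b)"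
    proof (rule eventually_mono)
      fix x assume "x \<in> {a<..<b}"
      hence "r x \<le> S" by (intro rS) auto
      thus "r x < y" using \<open>S < y\<close> by simp
    qed
  qed
  have LimS: "Lim (at_left b) (\<lambda>t. rho t / zeta t) = S"
    using tendsto_Lim[OF trivial_limit_at_left_real lim] by (simp add: r_def)
  have fnn: "0 \<le> f x" if "x \<in> {a..b}" for x
    using that a0 by (simp add: f_def psi_def)
  have c2rho: "c2 x * rho x = f x * r x" if "x \<in> {a..b}" for x
    using rho_eq[OF that] by (simp add: c2_def f_def power2_eq_square)
  have fint: "f integrable_on {a..b}" by (rule integrable_continuous_interval[OF fcont])
  have phi2eq: "integral {a..b} (\<lambda>x. c2 x * rho x) = integral {a..b} (\<lambda>x. f x * min (r x) S)"
    by (rule integral_spike[of "{b}"]) (auto simp: c2rho rS)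
  have phi2int': "(\<lambda>x. f x * min (r x) S) integrable_on {a..b}"
    by (rule integrable_spike[OF phi2int, of "{b}"]) (auto simp: c2rho rS)
  have "integral {a..b} (\<lambda>x. f x * min (r x) S) \<le> integral {a..b} (\<lambda>x. S * f x)"
  proof (rule integral_le[OF phi2int'])
    show "(\<lambda>x. S * f x) integrable_on {a..b}" using integrable_cmul[OF fint, of S] by simp
    fix x assume x: "x \<in> {a..b}"
    have "f x * min (r x) S \<le> f x * S" by (rule mult_left_mono) (use fnn[OF x] in auto)
    thus "f x * min (r x) S \<le> S * f x" by (simp add: mult.commute)
  qed
  also have "\<dots> = S * integral {a..b} f" using integral_mult[OF fint, of S] by simp
  finally have phi2le: "integral {a..b} (\<lambda>x. c2 x * rho x) \<le> S * integral {a..b} f"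
    using phi2eq by simp
  have fb: "f b > 0" using a0 ab zpos[of b] by (simp add: f_def psi_def)
  have "integral {a..b} f \<noteq> 0"
    using integral_eq_0_iff[OF fcont ab fnn] fb ab by auto
  hence Ipos: "integral {a..b} f > 0" using integral_nonneg[OF fint fnn] by simp
  define M where "M = m0 a b"
  have Mval: "M = (1+a*b)/(a+b)" by (simp add: M_def m0_eq a0 ab b1)
  have apb: "a + b > 0" using a0 ab by simp
  have Mab: "M*(a+b) = 1 + a*b" using apb by (simp add: Mval)
  have "(1-a)*(1-b) \<ge> 0" using ab b1 by (intro mult_nonneg_nonneg) auto
  hence "1 + a*b \<ge> a + b" by (simp add: algebra_simps)
  hence M1: "M \<ge> 1" using apb by (simp add: Mval)
  define w where "w = sqrt (M^2 - 1)"
  have "M^2 \<ge> 1" using M1 by (simp add: one_le_power)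
  hence M2: "M^2 - 1 \<ge> 0" by linarith
  have "w * w = M^2 - 1" unfolding w_def by (metis M2 abs_of_nonneg real_sqrt_mult_self)
  hence wsq: "w * w = M*M - 1" by (simp add: power2_eq_square)
  have w0: "w \<ge> 0" unfolding w_def using M2 by simp
  define c where "c = M - w"
  define c' where "c' = M + w"
  have qfact: "x^2 - 2*M*x + 1 = (x - c)*(x - c')" for x
  proof -
    have "(x - c)*(x - c') = x*x - 2*M*x + M*M - w * w"
      by (simp add: c_def c'_def algebra_simps)
    thus ?thesis using wsq by (simp add: power2_eq_square)
  qed
  have c'1: "c' \<ge> 1" using M1 w0 by (simp add: c'_def)
  have "(a+b)*(a^2 - 2*M*a + 1) = (a+b)*(a^2+1) - 2*a*(M*(a+b))" by (simp add: algebra_simps)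
  also have "\<dots> = (b-a)*(1-a^2)" unfolding Mab by (simp add: algebra_simps power2_eq_square)
  finally have qa': "(a+b)*(a^2 - 2*M*a + 1) = (b-a)*(1-a^2)" .
  have "a*a < 1" using a0 ab b1 mult_strict_mono'[of a 1 a 1] by auto
  hence "(b-a)*(1-a^2) > 0" using ab by (simp add: power2_eq_square)
  hence "a^2 - 2*M*a + 1 > 0" using qa' apb by (metis zero_less_mult_pos)
  hence qa: "(a - c)*(a - c') > 0" by (simp add: qfact)
  have "(a+b)*(b^2 - 2*M*b + 1) = (a+b)*(b^2+1) - 2*b*(M*(a+b))" by (simp add: algebra_simps)
  also have "\<dots> = -((b-a)*(1-b^2))" unfolding Mab by (simp add: algebra_simps power2_eq_square)
  finally have qb': "(a+b)*(b^2 - 2*M*b + 1) = -((b-a)*(1-b^2))" .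
  have "b*b < 1" using a0 ab b1 mult_strict_mono'[of b 1 b 1] by auto
  hence "(b-a)*(1-b^2) > 0" using ab by (simp add: power2_eq_square)
  hence "b^2 - 2*M*b + 1 < 0"
  proof -
    assume pos: "(b-a)*(1-b^2) > 0"
    show ?thesis
    proof (rule ccontr)
      assume "\<not> b^2 - 2*M*b + 1 < 0"
      hence "(a+b)*(b^2 - 2*M*b + 1) \<ge> 0" using apb by simp
      thus False using qb' pos by linarith
    qed
  qed
  hence qb: "(b - c)*(b - c') < 0" by (simp add: qfact)
  have ac: "a < c"
  proof (rule ccontr)
    assume "\<not> a < c"
    hence "(a - c)*(a - c') \<le> 0" using c'1 b1 ab by (intro mult_nonneg_nonpos) auto
    thus False using qa by simp
  qed
  have cb: "c < b"
  proof (rule ccontr)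
    assume "\<not> c < b"
    hence "(b - c)*(b - c') \<ge> 0" using c'1 b1 by (intro mult_nonpos_nonpos) auto
    thus False using qb by simp
  qed
  define k where "k = (\<lambda>x. zeta x + x*(x*(zeta x)^2) - M*(x*(zeta x)^2))"
  have keq: "k x = (zeta x)^2 / 2 * ((x - c)*(x - c'))" if x: "x \<in> {a..b}" for x
  proof -
    have "x*x < 1" using x a0 b1 mult_strict_mono'[of x 1 x 1] by auto
    hence ne: "1 - x^2 \<noteq> 0" by (simp add: power2_eq_square)
    have zx: "zeta x = 2 / (1 - x^2)" by (simp add: zeta_def)
    have zz: "zeta x * (1 - x^2) = 2" using ne zx by (metis eq_divide_eq)
    have "k x - (zeta x)^2/2*(x^2 - 2*M*x + 1) = zeta x - zeta x * (zeta x * (1-x^2)) / 2"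
      unfolding k_def power2_eq_square by (simp add: field_simps)
    also have "\<dots> = 0" using zz by simp
    finally show ?thesis by (simp add: qfact)
  qed
  have zab: "zeta a < zeta b"
  proof -
    have "a*a < b*b" using a0 ab by (intro mult_strict_mono') auto
    moreover have "b*b < 1" using a0 ab b1 mult_strict_mono'[of b 1 b 1] by auto
    ultimately show ?thesis unfolding zeta_def
      by (intro divide_strict_left_mono) (auto simp: power2_eq_square)
  qed
  have kint0: "integral {a..b} k = 0"
  proof -
    define F0 where "F0 = (\<lambda>x. x * zeta x - M * zeta x)"
    have kc: "continuous_on {a..b} k" unfolding k_def by (intro continuous_intros zcont)
    have "integral {a..b} k = F0 b - F0 a"
    proof (rule ftc_ctbl[OF ab _ countable_empty integrable_continuous_interval[OF kc]])
      show "continuous_on {a..b} F0" unfolding F0_def by (intro continuous_intros zcont)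
      fix x assume x: "x \<in> {a<..<b} - {}"
      have zd: "(zeta has_real_derivative x * (zeta x)^2) (at x)" using zder x by auto
      have zc: "isCont zeta x" using zd DERIV_isCont by auto
      show "(F0 has_real_derivative k x) (at x)" unfolding F0_def k_def
        by (auto intro!: derivative_eq_intros zd simp: algebra_simps)
      show "isCont k x" unfolding k_def by (intro continuous_intros zc)
    qed
    also have "\<dots> = 0"
    proof -
      have "zeta b - zeta a \<noteq> 0" using zab by simp
      hence "M * (zeta b - zeta a) = b * zeta b - a * zeta a" by (simp add: M_def m0_def)
      thus ?thesis by (simp add: F0_def algebra_simps)
    qed
    finally show ?thesis .
  qed
  have kcont: "continuous_on {a..b} k" unfolding k_def by (intro continuous_intros zcont)
  have cab: "c \<in> {a..b}" using ac cb by auto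
  have kpt: "k x * (psi x - psi c) \<le> 0" if x: "x \<in> {a..b}" for x
  proof -
    have B: "(x - c)*(psi x - psi c) \<ge> 0"
    proof (cases "x \<le> c")
      case True
      hence "psi x \<le> psi c" using x cab by (intro psimono) auto
      thus ?thesis using True by (intro mult_nonpos_nonpos) auto
    next
      case False
      hence "psi c \<le> psi x" using x cab by (intro psimono) auto
      thus ?thesis using False by (intro mult_nonneg_nonneg) auto
    qed
    have C: "x - c' < 0" using x c'1 b1 by auto
    have "k x * (psi x - psi c) = ((zeta x)^2 / 2 * ((x - c)*(psi x - psi c))) * (x - c')"
      unfolding keq[OF x] by (simp only: mult_ac)
    also have "\<dots> \<le> 0" using B C by (intro mult_nonneg_nonpos) auto
    finally show ?thesis .
  qed
  have kd_int: "(\<lambda>x. k x * (psi x - psi c)) integrable_on {a..b}"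
    by (intro integrable_continuous_interval continuous_intros kcont psicont)
  have kint: "k integrable_on {a..b}" by (rule integrable_continuous_interval[OF kcont])
  have kcm: "(\<lambda>x. psi c * k x) integrable_on {a..b}" using integrable_cmul[OF kint, of "psi c"] by simp
  have Ikpsi: "integral {a..b} (\<lambda>x. k x * psi x) = integral {a..b} (\<lambda>x. k x * (psi x - psi c))"
  proof -
    have "integral {a..b} (\<lambda>x. k x * psi x) = integral {a..b} (\<lambda>x. k x * (psi x - psi c) + psi c * k x)"
      by (rule integral_cong) (simp add: algebra_simps)
    also have "\<dots> = integral {a..b} (\<lambda>x. k x * (psi x - psi c)) + integral {a..b} (\<lambda>x. psi c * k x)"
      by (rule integral_add[OF kd_int kcm])
    also have "integral {a..b} (\<lambda>x. psi c * k x) = psi c * integral {a..b} k"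
      by (rule integral_mult[OF kint, symmetric])
    finally show ?thesis using kint0 by simp
  qed
  have Ikd_le: "integral {a..b} (\<lambda>x. k x * (psi x - psi c)) \<le> 0"
    using integral_le[OF kd_int integrable_0] kpt by simp
  have fcm: "(\<lambda>x. M * f x) integrable_on {a..b}" using integrable_cmul[OF fint, of M] by simp
  have phi1eq: "integral {a..b} phi1 = integral {a..b} (\<lambda>x. k x * psi x) + M * integral {a..b} f"
  proof -
    have kpint: "(\<lambda>x. k x * psi x) integrable_on {a..b}"
      by (intro integrable_continuous_interval continuous_intros kcont psicont)
    have "integral {a..b} phi1 = integral {a..b} (\<lambda>x. k x * psi x + M * f x)"
      by (rule integral_cong) (simp add: phi1_def k_def f_def algebra_simps)
    also have "\<dots> = integral {a..b} (\<lambda>x. k x * psi x) + integral {a..b} (\<lambda>x. M * f x)"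
      by (rule integral_add[OF kpint fcm])
    also have "integral {a..b} (\<lambda>x. M * f x) = M * integral {a..b} f"
      by (rule integral_mult[OF fint, symmetric])
    finally show ?thesis .
  qed
  have main: "F b - F a = integral {a..b} (\<lambda>x. k x * (psi x - psi c)) + M * integral {a..b} f
      + integral {a..b} (\<lambda>x. c2 x * rho x)"
    using FTC' phi1eq Ikpsi by simp
  have mval: "m_rho rho a b = (F b - F a) / integral {a..b} f" by (rule mrho)
  have ineq: "m_rho rho a b \<le> S + M"
  proof -
    have "F b - F a \<le> (S + M) * integral {a..b} f"
      using main Ikd_le phi2le by (simp add: algebra_simps)
    thus ?thesis using Ipos by (simp add: mval pos_divide_le_eq)
  qed
  have strict: "m_rho rho a b < S + M" if t0: "t0 \<in> {a..<b}" "rho t0 \<noteq> 0" for t0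
  proof -
    have t0ab: "t0 \<in> {a..b}" using t0 by auto
    have rt0: "rho t0 > 0" using rhonn[OF t0ab] t0(2) by simp
    have rrt0: "r t0 > 0" using rt0 zpos[OF t0ab] by (simp add: r_def)
    define s' where "s' = max t0 c"
    have s': "a \<le> s'" "c \<le> s'" "s' < b" "t0 \<le> s'" using t0 cab cb by (auto simp: s'_def)
    define \<delta> where "\<delta> = 2 * r t0"
    have dpos: "\<delta> > 0" using rrt0 by (simp add: \<delta>_def)
    have rhob: "\<delta> \<le> rho y" if y: "y \<in> {s'..b}" for y
    proof -
      have yab: "y \<in> {a..b}" using y s' by auto
      have "r t0 \<le> r y" using y s' t0ab yab by (intro rle) auto
      hence "2 * r t0 \<le> zeta y * r y" using z2[OF yab] rrt0 by (intro mult_mono) auto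
      thus ?thesis using rho_eq[OF yab] by (simp add: \<delta>_def)
    qed
    have "integral {s'..b} (\<lambda>_. \<delta>) \<le> integral {s'..b} rho"
      by (rule integral_le[OF integrable_const_ivl rhoint_sub]) (use s' rhob in auto)
    moreover have "integral {s'..b} (\<lambda>_. \<delta>) = (b - s') * \<delta>" using s' by simp
    moreover have "(b - s') * \<delta> > 0" using s' dpos by simp
    ultimately have ipos: "integral {s'..b} rho > 0" by linarith
    have "h b = h s' + integral {s'..b} rho" by (rule hsplit) (use s' in auto)
    moreover have "h c \<le> h s'" by (rule hmono) (use s' cab in auto)
    ultimately have "h c < h b" using ipos by linarith
    hence psicb: "psi c < psi b" by (simp add: psi_def)
    have kb: "k b < 0"
    proof -
      have "zeta b > 0" using zpos ab by auto
      hence zb: "(zeta b)^2 / 2 > 0" by simp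
      have "k b = (zeta b)^2 / 2 * ((b - c)*(b - c'))" using keq[of b] ab by simp
      also have "\<dots> < 0" using zb qb by (rule mult_pos_neg)
      finally show ?thesis .
    qed
    define g where "g = (\<lambda>x. - (k x * (psi x - psi c)))"
    have gcont: "continuous_on {a..b} g" unfolding g_def by (intro continuous_intros kcont psicont)
    have gnn: "\<And>x. x \<in> {a..b} \<Longrightarrow> 0 \<le> g x" using kpt by (simp add: g_def)
    have "g b > 0" using kb psicb by (simp add: g_def mult_neg_pos)
    hence "integral {a..b} g \<noteq> 0" using integral_eq_0_iff[OF gcont ab gnn] ab by auto
    moreover have "integral {a..b} g = - integral {a..b} (\<lambda>x. k x * (psi x - psi c))"
      by (simp add: g_def)
    ultimately have Ikd_lt: "integral {a..b} (\<lambda>x. k x * (psi x - psi c)) < 0" using Ikd_le by simp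
    have "F b - F a < (S + M) * integral {a..b} f"
      using main Ikd_lt phi2le by (simp add: algebra_simps)
    thus ?thesis using Ipos by (simp add: mval pos_divide_less_eq)
  qed
  have eqcase: "m_rho rho a b = S + M" if z: "\<forall>t\<in>{a..<b}. rho t = 0"
  proof -
    have "r ` {a..<b} = {0}" using z ab by (auto simp: r_def image_iff intro!: bexI[of _ a])
    hence S0: "S = 0" by (simp add: S_def)
    have h0: "h x = 0" if x: "x \<in> {a..b}" for x
    proof -
      have "integral {a..x} rho = integral {a..x} (\<lambda>_. 0::real)"
        by (rule integral_spike[of "{b}"]) (use z x in auto)
      thus ?thesis by (simp add: h_def)
    qed
    have psi1: "psi x = 1" if "x \<in> {a..b}" for x using h0[OF that] by (simp add: psi_def)
    have Fba: "F b - F a = b * zeta b - a * zeta a"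
      using psi1[of a] psi1[of b] ab by (simp add: F_def)
    have "integral {a..b} f = integral {a..b} (\<lambda>x. x * (zeta x)^2)"
      by (rule integral_cong) (simp add: f_def psi1)
    also have "\<dots> = zeta b - zeta a"
    proof (rule ftc_ctbl[OF ab zcont countable_empty])
      show "(\<lambda>x. x * (zeta x)^2) integrable_on {a..b}"
        by (intro integrable_continuous_interval continuous_intros zcont)
      fix x assume x: "x \<in> {a<..<b} - {}"
      show "(zeta has_real_derivative x * (zeta x)^2) (at x)" using zder x by auto
      have "isCont zeta x" using zder[of x] x DERIV_isCont by auto
      thus "isCont (\<lambda>x. x * (zeta x)^2) x" by (intro continuous_intros)
    qed
    finally have If: "integral {a..b} f = zeta b - zeta a" .
    show ?thesis using S0 by (simp add: mval Fba If M_def m0_def)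
  qed
  have LimS': "Lim (at_left b) (\<lambda>t. rho t / zeta t) + m0 a b = S + M"
    using LimS by (simp add: M_def)
  show ?thesis
  proof (intro conjI iffI)
    show "m_rho rho a b \<le> Lim (at_left b) (\<lambda>t. rho t / zeta t) + m0 a b"
      using ineq LimS' by simp
  next
    assume eq: "m_rho rho a b = Lim (at_left b) (\<lambda>t. rho t / zeta t) + m0 a b"
    show "\<forall>t\<in>{a..<b}. rho t = 0"
    proof (rule ccontr)
      assume "\<not> (\<forall>t\<in>{a..<b}. rho t = 0)"
      then obtain t0 where "t0 \<in> {a..<b}" "rho t0 \<noteq> 0" by auto
      from strict[OF this] eq LimS' show False by simp
    qed
  next
    assume "\<forall>t\<in>{a..<b}. rho t = 0"
    from eqcase[OF this] LimS' show "m_rho rho a b = Lim (at_left b) (\<lambda>t. rho t / zeta t) + m0 a b"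
      by simp
  qed
qed

end
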